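(* Let $q$ be a prime, $0<\rho_1<1$, $0<\epsilon<1$, and let $S\subseteq\mathbb{Z}/q\mathbb{Z}$ with $|S|\ge\rho_1 q$. Then there exists an integer $1\le h\le q-1$ such that the set $S'=\{hs \bmod q: s\in S\}$ has the property: for every integer $a$ with $|a|\le q/2$ and $\left|f_{S'}(a/q)\right|>\epsilon|S|$, we have $|a|<q^{1-\rho_1\epsilon^2}$.
   Context: $e(u)=\exp(2\pi i u)$. For a subset $T$ of $\mathbb{Z}/q\mathbb{Z}$, identified with the set of its least nonnegative residues in $\{0,\dots,q-1\}$, $f_T(t)=\sum_{s\in T} e(st)$ for real $t$. *)

theory Defs
  imports "HOL-Analysis.Analysis"
begin

definition e :: "real \<Rightarrow> complex" where
  "e u = exp (2 * complex_of_real pi * \<i> * complex_of_real u)"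

text \<open>Subsets of Z/qZ are represented by their least nonnegative residues, i.e. subsets of {0..<q}.
  f_T(t) = sum over s in T of e(s t).\<close>
definition fT :: "nat set \<Rightarrow> real \<Rightarrow> complex" where
  "fT T t = (\<Sum>s\<in>T. e (real s * t))"

end

theory Submission imports Defs "HOL-Number_Theory.Number_Theory" begin

lemma e_add: "e (x + y) = e x * e y"
  unfolding e_def by (simp add: distrib_left exp_add[symmetric])

lemma e_int: "e (of_int n) = 1"
proof -
  have "e (of_int n) = exp ((2 * of_int n * pi) * \<i>)"
    unfolding e_def by (simp add: algebra_simps)
  also have "\<dots> = 1" by (rule exp_integer_2pi) simp
  finally show ?thesis .
qed

lemma e_shift: assumes "x - y = of_int n" shows "e x = e y"
proof -
  have "x = y + of_int n" using assms by simp
  then show ?thesis by (simp add: e_add e_int)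
qed

lemma e_cnj: "cnj (e x) = e (- x)"
  unfolding e_def by (simp add: exp_cnj)

lemma e_pow: "e x ^ n = e (real n * x)"
  unfolding e_def by (simp add: exp_of_nat_mult[symmetric] algebra_simps)

lemma e_eq_1: assumes "e x = 1" shows "x \<in> \<int>"
proof -
  have "exp (complex_of_real (2*pi*x) * \<i>) = 1" using assms unfolding e_def by (simp add: algebra_simps)
  then obtain n :: int where "2*pi*x = of_int (2*n) * pi" by (auto simp: exp_eq_1)
  then have "x = of_int n" by simp
  then show ?thesis by simp
qed


lemma root_sum:
  assumes "q > 0"
  shows "(\<Sum>b<q. e (real_of_int d * real b / real q)) = (if int q dvd d then of_nat q else 0)"
proof -
  define z where "z = e (real_of_int d / real q)"
  have zb: "e (real_of_int d * real b / real q) = z ^ b" for b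
    unfolding z_def e_pow by (simp add: algebra_simps)
  show ?thesis
  proof (cases "int q dvd d")
    case True
    then obtain k where k: "d = int q * k" by auto
    have "z = 1" unfolding z_def k using assms by (simp add: e_int)
    then show ?thesis using True by (simp add: zb)
  next
    case False
    have "z \<noteq> 1"
    proof
      assume "z = 1"
      then have "real_of_int d / real q \<in> \<int>" unfolding z_def by (rule e_eq_1)
      then obtain k where "real_of_int d / real q = of_int k" by (auto elim: Ints_cases)
      then have "real_of_int d = real_of_int (int q * k)" using assms by (simp add: field_simps)
      then have "d = int q * k" by linarith
      then show False using False by auto
    qed
    moreover have "z ^ q = 1" unfolding z_def e_pow using assms by (simp add: e_int)
    ultimately show ?thesis using False by (simp add: zb sum_gp_strict)
  qed
qed

lemma parseval:
  assumes "q > 0" "S \<subseteq> {0..<q}"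
  shows "(\<Sum>b<q. (cmod (fT S (real b / real q)))^2) = real q * real (card S)"
proof -
  have fin: "finite S" using assms(2) finite_subset by blast
  have "complex_of_real (\<Sum>b<q. (cmod (fT S (real b / real q)))^2)
      = (\<Sum>b<q. fT S (real b / real q) * cnj (fT S (real b / real q)))"
    unfolding of_real_sum by (simp only: complex_norm_square)
  also have "\<dots> = (\<Sum>b<q. \<Sum>s'\<in>S. \<Sum>s\<in>S. e (real_of_int (int s - int s') * real b / real q))"
    unfolding fT_def
    by (simp add: sum_distrib_left sum_distrib_right e_cnj e_add[symmetric] algebra_simps diff_divide_distrib)
  also have "\<dots> = (\<Sum>s'\<in>S. \<Sum>b<q. \<Sum>s\<in>S. e (real_of_int (int s - int s') * real b / real q))"
    by (rule sum.swap)
  also have "\<dots> = (\<Sum>s'\<in>S. \<Sum>s\<in>S. \<Sum>b<q. e (real_of_int (int s - int s') * real b / real q))"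
    by (rule sum.cong[OF refl], rule sum.swap)
  also have "\<dots> = (\<Sum>s'\<in>S. \<Sum>s\<in>S. if s' = s then of_nat q else 0)"
  proof (intro sum.cong refl)
    fix s' s assume "s' \<in> S" "s \<in> S"
    then have lt: "s < q" "s' < q" using assms(2) by auto
    have "int q dvd (int s - int s') \<longleftrightarrow> s' = s"
    proof
      assume "int q dvd (int s - int s')"
      then obtain k where k: "int s - int s' = int q * k" by auto
      have "k = 0"
      proof (rule ccontr)
        assume "k \<noteq> 0"
        then have "\<bar>int q * k\<bar> \<ge> int q" using `k \<noteq> 0` by (simp add: abs_mult mult_le_cancel_left1, linarith)
        then show False using k lt by linarith
      qed
      then show "s' = s" using k by simp
    qed simp
    then show "(\<Sum>b<q. e (real_of_int (int s - int s') * real b / real q)) = (if s' = s then of_nat q else 0)"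
      using root_sum[OF assms(1), of "int s - int s'"] by (simp only:)
  qed
  also have "\<dots> = of_nat q * of_nat (card S)"
    using fin by (simp add: sum.delta)
  also have "\<dots> = complex_of_real (real q * real (card S))" by simp
  finally show ?thesis by (simp only: of_real_eq_iff)
qed


lemma fT_zero: "fT S 0 = of_nat (card S)"
  by (simp add: fT_def e_def)

lemma F_sym:
  assumes "b \<le> q" "q > 0"
  shows "cmod (fT S (real (q - b) / real q)) = cmod (fT S (real b / real q))"
proof -
  have "fT S (real (q - b) / real q) = cnj (fT S (real b / real q))"
    unfolding fT_def cnj_sum e_cnj
  proof (rule sum.cong[OF refl])
    fix s assume "s \<in> S"
    have "real s * (real (q - b) / real q) - - (real s * (real b / real q)) = real_of_int (int s)"
      using assms by (simp add: of_nat_diff field_simps)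
    then show "e (real s * (real (q - b) / real q)) = e (- (real s * (real b / real q)))"
      by (rule e_shift)
  qed
  then show ?thesis by simp
qed

lemma spec_bound:
  assumes "q > 0" "S \<subseteq> {0..<q}" "0 < thr" "thr < real (card S)"
    "B \<subseteq> {1..(q-1) div 2}" "\<forall>b\<in>B. cmod (fT S (real b / real q)) > thr"
  shows "real (1 + 2 * card B) * thr^2 < real q * real (card S)"
proof -
  define F where "F b = cmod (fT S (real b / real q))" for b
  define P where "P = insert 0 (B \<union> (\<lambda>b. q - b) ` B)"
  have finB: "finite B" using assms(5) finite_subset by blast
  have two: "2 * ((q - 1) div 2) \<le> q - 1" by simp
  have disj: "B \<inter> (\<lambda>b. q - b) ` B = {}"
  proof (rule ccontr)
    assume "B \<inter> (\<lambda>b. q - b) ` B \<noteq> {}"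
    then obtain b b' where bb: "b \<in> B" "b' \<in> B" "b = q - b'" by blast
    have "b \<le> (q-1) div 2" "b' \<le> (q-1) div 2" using bb(1,2) assms(5) by auto
    then show False using bb(3) two assms(1) by arith
  qed
  have n0: "0 \<notin> B \<union> (\<lambda>b. q - b) ` B" using assms(5) two by force
  have inj: "inj_on (\<lambda>b. q - b) B"
    by (rule inj_onI) (use assms(5) two in force)
  have cardP: "card P = 1 + 2 * card B"
    unfolding P_def using finB disj n0 inj
    by (simp add: card_Un_disjoint card_image)
  have Psub: "P \<subseteq> {..<q}" unfolding P_def using assms(1,5) two by force
  have Pbig: "F b > thr" if bP: "b \<in> P" for b
  proof -
    consider "b = 0" | "b \<in> B" | b' where "b' \<in> B" "b = q - b'" using bP unfolding P_def by blast
    then show ?thesis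
    proof cases
      case 1 then show ?thesis using assms(4) by (simp add: F_def fT_zero)
    next
      case 2 then show ?thesis using assms(6) by (simp add: F_def)
    next
      case 3
      then have "b' \<le> q" using assms(5) by force
      then show ?thesis using 3 assms(1,6) F_sym[of b' q S] by (simp add: F_def)
    qed
  qed
  have "real (card P) * thr^2 = (\<Sum>b\<in>P. thr^2)" by simp
  also have "\<dots> < (\<Sum>b\<in>P. (F b)^2)"
  proof (rule sum_strict_mono)
    show "finite P" using Psub finite_subset by blast
    show "P \<noteq> {}" unfolding P_def by blast
    fix b assume "b \<in> P"
    then have "thr < F b" by (rule Pbig)
    then show "thr^2 < (F b)^2" using assms(3) by (simp add: power_strict_mono)
  qed
  also have "\<dots> \<le> (\<Sum>b<q. (F b)^2)"
    by (rule sum_mono2) (use Psub in auto)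
  also have "\<dots> = real q * real (card S)" unfolding F_def by (rule parseval[OF assms(1,2)])
  finally show ?thesis using cardP by simp
qed


lemma close_int:
  fixes a d K :: int and q :: nat
  assumes "\<bar>real_of_int a\<bar> \<le> real q / 2" "\<bar>real_of_int d\<bar> < real q / 2" "a = d + int q * K"
  shows "a = d"
proof -
  have e1: "real_of_int (int q * K) = real_of_int a - real_of_int d" using assms(3) by simp
  have "\<bar>real_of_int a - real_of_int d\<bar> \<le> \<bar>real_of_int a\<bar> + \<bar>real_of_int d\<bar>" by (rule abs_triangle_ineq4)
  then have "\<bar>real_of_int (int q * K)\<bar> < real q" unfolding e1 using assms(1,2) by linarith
  then have "real q * \<bar>real_of_int K\<bar> < real q * 1" by (simp add: abs_mult)
  then have "K = 0"
  proof (rule contrapos_pp)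
    assume "K \<noteq> 0"
    then have "1 \<le> \<bar>real_of_int K\<bar>" by linarith
    then have "real q * 1 \<le> real q * \<bar>real_of_int K\<bar>" by (rule mult_left_mono) simp
    then show "\<not> real q * \<bar>real_of_int K\<bar> < real q * 1" by linarith
  qed
  then show ?thesis using assms(3) by simp
qed

theorem lemma1:
  fixes q :: nat and \<rho>1 \<epsilon> :: real and S :: "nat set"
  assumes "prime q"
    and "0 < \<rho>1" and "\<rho>1 < 1"
    and "0 < \<epsilon>" and "\<epsilon> < 1"
    and "S \<subseteq> {0..<q}"
    and "real (card S) \<ge> \<rho>1 * real q"
  shows "\<exists>h::nat. 1 \<le> h \<and> h \<le> q - 1 \<and>
           (\<forall>a::int. \<bar>real_of_int a\<bar> \<le> real q / 2 \<longrightarrow>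
              norm (fT ((\<lambda>s. (h * s) mod q) ` S) (real_of_int a / real q)) > \<epsilon> * real (card S) \<longrightarrow>
              \<bar>real_of_int a\<bar> < real q powr (1 - \<rho>1 * \<epsilon>\<^sup>2))"
proof -
  define \<delta> where "\<delta> = \<rho>1 * \<epsilon>^2"
  have q2: "q \<ge> 2" using assms(1) prime_ge_2_nat by blast
  have fin: "finite S" using assms(6) finite_subset by blast
  have e2: "\<epsilon>^2 < 1" using assms(4,5) by (simp add: power_less_one_iff)
  have \<delta>0: "0 < \<delta>" unfolding \<delta>_def using assms(2,4) by simp
  have \<delta>1: "\<delta> < 1" unfolding \<delta>_def using assms(2,3) e2
    by (metis mult_less_cancel_right1 less_trans zero_less_power assms(4) mult.commute mult_strict_left_mono mult_1_right)
  have cS: "real (card S) > 0"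
  proof -
    have "\<rho>1 * real q > 0" using assms(2) q2 by simp
    then show ?thesis using assms(7) by linarith
  qed
  have qpos: "real q > 1" using q2 by simp
  show ?thesis
  proof (cases "real q / 2 < real q powr (1 - \<delta>)")
    case True
    show ?thesis
      apply (rule exI[of _ 1]) using True q2 by (auto simp: \<delta>_def)
  next
    case False
    then have Q: "real q powr (1 - \<delta>) \<le> real q / 2" by simp
    have qne2: "q \<noteq> 2"
    proof
      assume "q = 2"
      have "real q powr 0 < real q powr (1 - \<delta>)" using \<delta>1 qpos by (intro powr_less_mono) auto
      then show False using Q \<open>q = 2\<close> by simp
    qed
    then have oddq: "odd q" using prime_odd_nat[OF assms(1)] q2 by simp
    have qd: "real q powr \<delta> \<ge> 2"
    proof -
      have "real q = real q powr \<delta> * real q powr (1 - \<delta>)"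
        using qpos by (simp add: powr_add[symmetric])
      also have "\<dots> \<le> real q powr \<delta> * (real q / 2)" using Q by (intro mult_left_mono) auto
      finally show ?thesis using qpos by simp
    qed
    define thr where "thr = \<epsilon> * real (card S)"
    define B where "B = {b \<in> {1..(q-1) div 2}. cmod (fT S (real b / real q)) > thr}"
    define k where "k = card B"
    have thr0: "0 < thr" unfolding thr_def using assms(4) cS by simp
    have thr1: "thr < real (card S)" unfolding thr_def using assms(5) cS by simp
    have sb: "real (1 + 2 * k) * thr^2 < real q * real (card S)"
      unfolding k_def using q2 assms(6) thr0 thr1
      by (intro spec_bound) (auto simp: B_def)
    have kb: "real (1 + 2 * k) * \<delta> < 1"
    proof -
      have "real (1 + 2 * k) * \<epsilon>^2 * real (card S) * real (card S) < real q * real (card S)"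
        using sb by (simp add: thr_def power_mult_distrib power2_eq_square algebra_simps)
      then have A: "real (1 + 2 * k) * \<epsilon>^2 * real (card S) < real q"
        using cS by (simp add: mult_less_cancel_right)
      have "real (1 + 2 * k) * \<epsilon>^2 * (\<rho>1 * real q) \<le> real (1 + 2 * k) * \<epsilon>^2 * real (card S)"
        using assms(7) by (intro mult_left_mono) auto
      then have "real (1 + 2 * k) * \<delta> * real q < 1 * real q" using A unfolding \<delta>_def by (simp add: algebra_simps)
      then show ?thesis using qpos by (simp add: mult_less_cancel_right)
    qed
    define L where "L = nat \<lceil>real q powr (1 - \<delta>)\<rceil>"
    have L1: "real L \<ge> real q powr (1 - \<delta>)" unfolding L_def by linarith
    have L2: "real L - 1 < real q powr (1 - \<delta>)"
    proof -
      have "0 < real q powr (1 - \<delta>)" using qpos by simp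
      then have "real L = real_of_int \<lceil>real q powr (1 - \<delta>)\<rceil>" unfolding L_def by simp
      then show ?thesis by linarith
    qed
    have Lpos: "L > 0" using L1 powr_gt_zero[of "real q" "1 - \<delta>"] qpos by (cases L) auto
    define c where "c = (q - 1) div L + 1"
    have cb: "real c < real q powr \<delta> + 1"
    proof -
      have "real ((q - 1) div L) * real L \<le> real (q - 1)"
        by (metis div_times_less_eq_dividend of_nat_le_iff of_nat_mult)
      also have "\<dots> < real q" using q2 by simp
      also have "\<dots> = real q powr \<delta> * real q powr (1 - \<delta>)"
        using qpos by (simp add: powr_add[symmetric])
      also have "\<dots> \<le> real q powr \<delta> * real L" using L1 by (intro mult_left_mono) auto
      finally have "real ((q - 1) div L) < real q powr \<delta>" using Lpos by (simp add: mult_less_cancel_right)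
      then show ?thesis unfolding c_def by simp
    qed
    have ck: "c ^ k < q"
    proof -
      define y where "y = real q powr \<delta>"
      have y2: "y \<ge> 2" using qd y_def by simp
      have "real c ^ k \<le> (y + 1) ^ k" using cb y_def by (intro power_mono) auto
      also have "\<dots> \<le> (y^2) ^ k"
      proof -
        have "2 * y \<le> y * y" using y2 by (intro mult_right_mono) auto
        then have "y + 1 \<le> y^2" using y2 unfolding power2_eq_square by linarith
        then show ?thesis using y2 by (intro power_mono) auto
      qed
      also have "\<dots> = real q powr (real (2 * k) * \<delta>)"
        unfolding y_def using qpos by (simp add: powr_power power_mult[symmetric] mult_ac)
      also have "\<dots> \<le> real q powr (1 - \<delta>)"
        using kb qpos by (intro powr_mono) (auto simp: algebra_simps)
      also have "\<dots> < real q powr 1" using qpos \<delta>0 by (intro powr_less_mono) auto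
      finally have "real (c ^ k) < real q" using qpos by simp
      then show ?thesis by linarith
    qed
    define g where "g t = restrict (\<lambda>b. ((t * b) mod q) div L) B" for t
    have finB: "finite B" unfolding B_def by simp
    have gimg: "g ` {..<q} \<subseteq> PiE B (\<lambda>_. {..<c})"
    proof
      fix z assume "z \<in> g ` {..<q}"
      then obtain t where z: "z = g t" by blast
      have "(t * b) mod q div L < c" for b
      proof -
        have "(t * b) mod q < q" using q2 by simp
        then have "(t * b) mod q \<le> q - 1" by arith
        then have "(t * b) mod q div L \<le> (q - 1) div L" by (rule div_le_mono)
        then show ?thesis unfolding c_def by simp
      qed
      then show "z \<in> PiE B (\<lambda>_. {..<c})" unfolding z g_def by auto
    qed
    have "\<not> inj_on g {..<q}"
    proof
      assume "inj_on g {..<q}"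
      then have "card (g ` {..<q}) = q" by (simp add: card_image)
      moreover have "card (g ` {..<q}) \<le> card (PiE B (\<lambda>_. {..<c}))"
        using gimg finB by (intro card_mono) (auto intro: finite_PiE)
      moreover have "card (PiE B (\<lambda>_. {..<c})) = c ^ k" using finB by (simp add: card_PiE k_def)
      ultimately show False using ck by linarith
    qed
    then obtain x y where xy: "x < q" "y < q" "x \<noteq> y" "g x = g y" unfolding inj_on_def by auto
    define t1 where "t1 = max x y"
    define t2 where "t2 = min x y"
    have t12: "t1 < q" "t2 < t1" "g t1 = g t2" using xy unfolding t1_def t2_def by (auto simp: max_def min_def)
    define t where "t = t1 - t2"
    have t0: "0 < t" "t < q" using t12 unfolding t_def by auto
    have dclose: "\<exists>d K. \<bar>d\<bar> \<le> int L - 1 \<and> int t * int b = d + int q * K" if bB: "b \<in> B" for b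
    proof -
      define x1 where "x1 = (t1 * b) mod q"
      define x2 where "x2 = (t2 * b) mod q"
      have "g t1 b = g t2 b" using t12(3) by simp
      then have eqd: "x1 div L = x2 div L" using bB unfolding g_def x1_def x2_def by simp
      have "x1 = L * (x1 div L) + x1 mod L" by simp
      then have ex1: "x1 = L * (x2 div L) + x1 mod L" by (simp only: eqd)
      have ex2: "x2 = L * (x2 div L) + x2 mod L" by simp
      have i1: "int x1 = int L * int (x2 div L) + int (x1 mod L)" using arg_cong[OF ex1, of int] by simp
      have i2: "int x2 = int L * int (x2 div L) + int (x2 mod L)"
      proof -
        have "int x2 = int (L * (x2 div L) + x2 mod L)" by simp
        then show ?thesis by (simp only: of_nat_add of_nat_mult)
      qed
      have "int x1 - int x2 = int (x1 mod L) - int (x2 mod L)" using i1 i2 by linarith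
      moreover have "x1 mod L < L" "x2 mod L < L" using Lpos by simp_all
      ultimately have dd: "\<bar>int x1 - int x2\<bar> \<le> int L - 1" by linarith
      have j1: "int (t1 * b) = int q * int (t1 * b div q) + int x1"
      proof -
        have "int (t1 * b) = int (q * (t1 * b div q) + x1)" unfolding x1_def by simp
        then show ?thesis by (simp only: of_nat_add of_nat_mult)
      qed
      have j2: "int (t2 * b) = int q * int (t2 * b div q) + int x2"
      proof -
        have "int (t2 * b) = int (q * (t2 * b div q) + x2)" unfolding x2_def by simp
        then show ?thesis by (simp only: of_nat_add of_nat_mult)
      qed
      have tb: "int t * int b = int (t1 * b) - int (t2 * b)"
        unfolding t_def using t12 by (simp add: of_nat_diff left_diff_distrib)
      have eq: "int t * int b = (int x1 - int x2) + int q * (int (t1 * b div q) - int (t2 * b div q))"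
        unfolding right_diff_distrib using j1 j2 tb by linarith
      show ?thesis by (rule exI[of _ "int x1 - int x2"], rule exI[of _ "int (t1 * b div q) - int (t2 * b div q)"]) (use dd eq in simp)
    qed
    have "coprime q t" using assms(1) t0 by (intro prime_imp_coprime) (auto dest: dvd_imp_le)
    then have "coprime t q" by (simp add: coprime_commute)
    then obtain h0 where "[t * h0 = Suc 0] (mod q)" using cong_solve_coprime_nat by blast
    then have "(t * h0) mod q = 1" using q2 by (simp add: cong_def)
    define h where "h = h0 mod q"
    have th1: "(t * h) mod q = 1" unfolding h_def using \<open>(t * h0) mod q = 1\<close> by (simp add: mod_mult_right_eq)
    have h1: "1 \<le> h" using th1 by (cases h) auto
    have "h < q" unfolding h_def using q2 by simp
    then have h2: "h \<le> q - 1" by arith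
    define m where "m = t * h div q"
    have "t * h = q * (t * h div q) + (t * h) mod q" by simp
    then have tm: "t * h = q * m + 1" unfolding m_def by (simp only: th1)
    have injh: "inj_on (\<lambda>s. (h * s) mod q) S"
    proof (rule inj_onI)
      fix s s' assume ss: "s \<in> S" "s' \<in> S" "(h * s) mod q = (h * s') mod q"
      have key: "(t * ((h * u) mod q)) mod q = u" if "u < q" for u
      proof -
        have "(t * ((h * u) mod q)) mod q = (t * h * u) mod q" by (simp add: mod_mult_right_eq mult.assoc)
        also have "\<dots> = (q * (m * u) + u) mod q" using tm by (simp add: algebra_simps)
        also have "\<dots> = u" using that by simp
        finally show ?thesis .
      qed
      have "s < q" "s' < q" using ss assms(6) by auto
      then show "s = s'" using key[OF \<open>s < q\<close>] key[OF \<open>s' < q\<close>] ss(3) by metis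
    qed
    show ?thesis
    proof (intro exI[of _ h] conjI h1 h2 allI impI)
      fix a :: int
      assume aq: "\<bar>real_of_int a\<bar> \<le> real q / 2"
        and big: "norm (fT ((\<lambda>s. (h * s) mod q) ` S) (real_of_int a / real q)) > \<epsilon> * real (card S)"
      define Y where "Y = (int h * a) div int q"
      define r where "r = nat ((int h * a) mod int q)"
      have m0: "0 \<le> (int h * a) mod int q" using q2 by simp
      have "int r = (int h * a) mod int q" unfolding r_def using m0 by simp
      also have "\<dots> = int h * a - int q * Y" unfolding Y_def by (rule minus_mult_div_eq_mod[symmetric])
      finally have rY: "int r = int h * a - int q * Y" .
      have rq: "r < q" unfolding r_def using q2 by (simp add: nat_less_iff)
      have "fT ((\<lambda>s. (h * s) mod q) ` S) (real_of_int a / real q) = fT S (real r / real q)"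
        unfolding fT_def sum.reindex[OF injh] o_def
      proof (rule sum.cong[OF refl])
        fix s assume "s \<in> S"
        define X where "X = int (h * s div q)"
        have hs: "int ((h * s) mod q) = int h * int s - int q * X"
        proof -
          have "int (h * s) = int (q * (h * s div q) + (h * s) mod q)" by simp
          then have "int h * int s = int q * X + int ((h * s) mod q)" unfolding X_def by (simp only: of_nat_mult of_nat_add)
          then show ?thesis by linarith
        qed
        have "real_of_int (int ((h * s) mod q)) * (real_of_int a / real q) - real s * (real_of_int (int r) / real q)
              = real_of_int (int s * Y - X * a)"
          unfolding hs rY using q2 by (simp add: field_simps)
        then have diff: "real ((h * s) mod q) * (real_of_int a / real q) - real s * (real r / real q)
              = real_of_int (int s * Y - X * a)" by simp
        show "e (real ((h * s) mod q) * (real_of_int a / real q)) = e (real s * (real r / real q))"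
          by (rule e_shift[OF diff])
      qed
      then have Fr: "cmod (fT S (real r / real q)) > thr" using big unfolding thr_def by simp
      have aeq: "a = int t * int r + int q * (int t * Y - int m * a)"
      proof -
        have "int (t * h) = int (q * m + 1)" by (simp only: tm)
        then have "int t * int h = int q * int m + 1" by (simp only: of_nat_mult of_nat_add of_nat_1)
        then have th: "int t * (int h * a) = int q * int m * a + a" by (simp add: algebra_simps)
        have "int t * int r = int t * (int h * a) - int q * (int t * Y)" unfolding rY by (simp add: algebra_simps)
        also have "\<dots> = int q * int m * a + a - int q * (int t * Y)" by (simp only: th)
        finally have "int t * int r = int q * int m * a + a - int q * (int t * Y)" .
        moreover have "int q * (int t * Y - int m * a) = int q * (int t * Y) - int q * int m * a" by (simp add: algebra_simps)
        ultimately show ?thesis by linarith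
      qed
      have qh: "real L - 1 < real q / 2" using L2 Q by linarith
      have ex: "\<exists>d K. \<bar>d\<bar> \<le> int L - 1 \<and> a = d + int q * K"
      proof (cases "r = 0")
        case True
        then have tr0: "int t * int r = 0" by simp
        have "a = 0 + int q * (int t * Y - int m * a)" by (rule aeq[unfolded tr0])
        then show ?thesis using Lpos by (intro exI[of _ 0] exI[of _ "int t * Y - int m * a"]) simp
      next
        case False
        show ?thesis
        proof (cases "r \<le> (q - 1) div 2")
          case True
          then have "r \<in> B" unfolding B_def using False Fr by auto
          then obtain d K where dK: "\<bar>d\<bar> \<le> int L - 1" "int t * int r = d + int q * K" using dclose by blast
          have "a = (d + int q * K) + int q * (int t * Y - int m * a)" by (rule aeq[unfolded dK(2)])
          also have "\<dots> = d + int q * (K + (int t * Y - int m * a))" by (simp add: algebra_simps)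
          finally show ?thesis using dK(1) by (intro exI[of _ d] exI[of _ "K + (int t * Y - int m * a)"]) simp
        next
          case nle: False
          define b where "b = q - r"
          obtain j where qj: "q = 2 * j + 1" using oddq by (auto elim!: oddE)
          then have "(q - 1) div 2 = j" by simp
          then have bq: "b \<ge> 1" "b \<le> (q - 1) div 2" unfolding b_def using rq nle qj by arith+
          have "cmod (fT S (real b / real q)) = cmod (fT S (real r / real q))"
            unfolding b_def using rq q2 by (intro F_sym) auto
          then have "b \<in> B" unfolding B_def using bq Fr by auto
          then obtain d K where dK: "\<bar>d\<bar> \<le> int L - 1" "int t * int b = d + int q * K" using dclose by blast
          have "int r = int q - int b" unfolding b_def using rq by simp
          have tr: "int t * int r = int q * int t - d - int q * K"
          proof -
            have "int t * int r = int t * int q - int t * int b" using \<open>int r = int q - int b\<close> by (simp add: right_diff_distrib)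
            then show ?thesis using dK(2) by (simp add: algebra_simps)
          qed
          have "a = (int q * int t - d - int q * K) + int q * (int t * Y - int m * a)" by (rule aeq[unfolded tr])
          also have "\<dots> = - d + int q * (int t - K + (int t * Y - int m * a))" by (simp add: algebra_simps)
          finally have "a = - d + int q * (int t - K + (int t * Y - int m * a))" .
          then show ?thesis using dK(1) by (intro exI[of _ "-d"] exI[of _ "int t - K + (int t * Y - int m * a)"]) simp
        qed
      qed
      then obtain d K where dK: "\<bar>d\<bar> \<le> int L - 1" "a = d + int q * K" by blast
      have "real_of_int \<bar>d\<bar> \<le> real_of_int (int L - 1)" using dK(1) by (simp only: of_int_le_iff)
      then have "\<bar>real_of_int d\<bar> \<le> real L - 1" by simp
      then have "\<bar>real_of_int d\<bar> < real q / 2" using qh by linarith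
      then have "a = d" using close_int[OF aq _ dK(2)] by blast
      then have "\<bar>real_of_int a\<bar> \<le> real L - 1" using \<open>\<bar>real_of_int d\<bar> \<le> real L - 1\<close> by simp
      then show "\<bar>real_of_int a\<bar> < real q powr (1 - \<rho>1 * \<epsilon>\<^sup>2)" using L2 unfolding \<delta>_def by linarith
    qed
  qed
qed

end
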